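(* Let $0<|q|<1$ and let $x,y,u,v,t$ be complex numbers with $|t|<1$, $|xt|<1$, $|ut|<1$, $|uxt|<1$. Then $$\sum_{n=0}^\infty h_n(x,y|q)\,h_n(u,v|q)\,\frac{t^n}{(q;q)_n}=\frac{(yt,vxt;q)_\infty}{(t,xt,uxt;q)_\infty}\ {}_3\phi_2\left(\begin{array}{c} y,\ xt,\ v/u\\ yt,\ vxt\end{array}; q,\ ut\right).$$
   Context: Throughout $|q|<1$. The $q$-shifted factorials are $(a;q)_0=1$, $(a;q)_n=\prod_{k=0}^{n-1}(1-aq^k)$, $(a;q)_\infty=\prod_{k=0}^\infty(1-aq^k)$, and $(a_1,\dots,a_m;q)_n=(a_1;q)_n\cdots(a_m;q)_n$ (similarly for $n=\infty$). The Gaussian coefficient is ${n\brack k}=\frac{(q;q)_n}{(q;q)_k(q;q)_{n-k}}$. The basic hypergeometric series is ${}_{r+1}\phi_r\left(\begin{array}{c}a_1,\dots,a_{r+1}\\ b_1,\dots,b_r\end{array};q,z\right)=\sum_{n\ge0}\frac{(a_1,\dots,a_{r+1};q)_n}{(q,b_1,\dots,b_r;q)_n}z^n$. The Cauchy polynomials are $P_n(x,y)=(x-y)(x-qy)\cdots(x-q^{n-1}y)$ (with $P_0=1$), and the bivariate Rogers–Szegő polynomials are $h_n(x,y|q)=\sum_{k=0}^n {n\brack k}P_k(x,y)$. *)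

theory Defs
  imports "HOL-Analysis.Analysis"
begin

definition qpoch :: "complex \<Rightarrow> complex \<Rightarrow> nat \<Rightarrow> complex" where
  "qpoch a q n = (\<Prod>k<n. 1 - a * q ^ k)"

definition qpoch_inf :: "complex \<Rightarrow> complex \<Rightarrow> complex" where
  "qpoch_inf a q = (\<Prod>k. 1 - a * q ^ k)"

definition qbinom :: "complex \<Rightarrow> nat \<Rightarrow> nat \<Rightarrow> complex" where
  "qbinom q n k = qpoch q q n / (qpoch q q k * qpoch q q (n - k))"

text \<open>basic hypergeometric series (r+1)phi(r): upper parameters as, lower parameters bs\<close>
definition bhs :: "complex list \<Rightarrow> complex list \<Rightarrow> complex \<Rightarrow> complex \<Rightarrow> complex" where
  "bhs as bs q z = (\<Sum>n. (\<Prod>a\<leftarrow>as. qpoch a q n) /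
        (qpoch q q n * (\<Prod>b\<leftarrow>bs. qpoch b q n)) * z ^ n)"

definition cauchyP :: "complex \<Rightarrow> nat \<Rightarrow> complex \<Rightarrow> complex \<Rightarrow> complex" where
  "cauchyP q n x y = (\<Prod>k<n. x - q ^ k * y)"

definition rsh :: "complex \<Rightarrow> nat \<Rightarrow> complex \<Rightarrow> complex \<Rightarrow> complex" where
  "rsh q n x y = (\<Sum>k\<le>n. qbinom q n k * cauchyP q k x y)"

end

theory Submission
  imports Defs
begin

lemma DR:
  fixes a :: "nat \<Rightarrow> nat \<Rightarrow> complex" and \<alpha> \<beta> :: "nat \<Rightarrow> real"
  assumes bnd: "\<And>i j. norm (a i j) \<le> \<alpha> i * \<beta> j"
    and sa: "summable \<alpha>" and sb: "summable \<beta>"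
    and a0: "\<And>i. \<alpha> i \<ge> 0" and b0: "\<And>j. \<beta> j \<ge> 0"
    and rows: "\<And>i. (\<lambda>j. a i j) sums A i"
  shows "\<exists>S. A sums S \<and> (\<lambda>n. \<Sum>i\<le>n. a i (n - i)) sums S"
proof -
  have hb: "((\<lambda>j. \<alpha> i * \<beta> j) has_sum (\<alpha> i * suminf \<beta>)) UNIV" for i
    by (rule sums_nonneg_imp_has_sum) (use sb a0 b0 in \<open>auto intro!: sums_mult summable_sums\<close>)
  have ga: "(\<lambda>i. \<alpha> i * suminf \<beta>) summable_on UNIV"
    by (rule norm_summable_imp_summable_on) (use sa sb a0 b0 suminf_nonneg[OF sb b0] in \<open>auto simp: abs_mult intro!: summable_mult2\<close>)
  have g: "(\<lambda>(i,j). \<alpha> i * \<beta> j) summable_on Sigma UNIV (\<lambda>_. UNIV)"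
    by (rule summable_on_SigmaI[OF _ ga]) (use hb a0 b0 in auto)
  have f_abs: "Infinite_Sum.abs_summable_on (\<lambda>(i,j). a i j) UNIV"
  proof (rule Infinite_Sum.abs_summable_on_comparison_test)
    show "Infinite_Sum.abs_summable_on (\<lambda>(i,j). \<alpha> i * \<beta> j) UNIV"
      using g a0 b0 by (auto simp: case_prod_unfold)
    show "norm ((\<lambda>(i,j). a i j) x) \<le> norm ((\<lambda>(i,j). \<alpha> i * \<beta> j) x)" for x
      using bnd[of "fst x" "snd x"] a0 b0 by (auto simp: case_prod_unfold)
  qed
  then have fs: "(\<lambda>(i,j). a i j) summable_on UNIV" by (rule abs_summable_summable)
  define S where "S = infsum (\<lambda>(i,j). a i j) UNIV"
  have fS: "((\<lambda>(i,j). a i j) has_sum S) (Sigma UNIV (\<lambda>_. UNIV))"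
    using fs unfolding S_def by (simp add: summable_iff_has_sum_infsum)
  have rowh: "((\<lambda>j. a i j) has_sum A i) UNIV" for i
  proof (rule norm_summable_imp_has_sum[OF _ rows])
    show "summable (\<lambda>j. norm (a i j))"
      by (rule summable_comparison_test[of _ "\<lambda>j. \<alpha> i * \<beta> j"])
         (use bnd sb in \<open>auto intro!: summable_mult\<close>)
  qed
  have "(A has_sum S) UNIV"
    by (rule has_sum_SigmaD[OF fS]) (use rowh in auto)
  then have AS: "A sums S" by (rule has_sum_imp_sums)
  have dS: "((\<lambda>(n,i). a i (n - i)) has_sum S) (Sigma UNIV (\<lambda>n. {..n}))"
  proof -
    have "((\<lambda>(n,i). a i (n - i)) has_sum S) (Sigma UNIV (\<lambda>n. {..n}))
        = ((\<lambda>(i,j). a i j) has_sum S) (Sigma UNIV (\<lambda>_. UNIV))"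
      by (rule has_sum_reindex_bij_witness[where j = "\<lambda>(n,i). (i, n - i)" and i = "\<lambda>(i,j). (i + j, i)"])
         auto
    then show ?thesis using fS by simp
  qed
  have "((\<lambda>n. \<Sum>i\<le>n. a i (n - i)) has_sum S) UNIV"
    by (rule has_sum_SigmaD[OF dS]) auto
  then have "(\<lambda>n. \<Sum>i\<le>n. a i (n - i)) sums S" by (rule has_sum_imp_sums)
  with AS show ?thesis by blast
qed

fun gb :: "complex \<Rightarrow> nat \<Rightarrow> nat \<Rightarrow> complex" where
  "gb q m 0 = 1"
| "gb q 0 (Suc l) = 0"
| "gb q (Suc m) (Suc l) = gb q m l + q ^ Suc l * gb q m (Suc l)"

lemma gb_zero: "m < l \<Longrightarrow> gb q m l = 0"
proof (induction m arbitrary: l)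
  case 0 then show ?case by (cases l) auto
next
  case (Suc m) then show ?case by (cases l) auto
qed

lemma cP_0: "cauchyP q 0 x y = 1"
  by (simp add: cauchyP_def)

lemma cP_scale: "cauchyP q l (c * x) (c * y) = c ^ l * cauchyP q l x y"
proof -
  have "cauchyP q l (c * x) (c * y) = (\<Prod>k<l. c * (x - q ^ k * y))"
    unfolding cauchyP_def by (simp add: algebra_simps)
  also have "\<dots> = c ^ l * cauchyP q l x y"
    by (simp add: prod.distrib cauchyP_def)
  finally show ?thesis .
qed

lemma summable_lin_geo:
  fixes r :: real
  assumes "0 \<le> r" "r < 1"
  shows "summable (\<lambda>n. (real n + 1) * r ^ n)"
proof -
  have s: "summable (\<lambda>n. norm (r ^ n))" using assms by (simp add: summable_geometric)
  have "(\<lambda>n. \<Sum>i\<le>n. r ^ i * r ^ (n - i)) sums ((\<Sum>n. r ^ n) * (\<Sum>n. r ^ n))"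
    by (rule Cauchy_product_sums[OF s s])
  moreover have "(\<Sum>i\<le>n. r ^ i * r ^ (n - i)) = (real n + 1) * r ^ n" for n
  proof -
    have "(\<Sum>i\<le>n. r ^ i * r ^ (n - i)) = (\<Sum>i\<le>n. r ^ n)"
      by (rule sum.cong) (auto simp: power_add[symmetric])
    then show ?thesis by simp
  qed
  ultimately show ?thesis by (simp add: sums_iff)
qed

lemma max_prod_lt:
  fixes a b c :: real
  assumes "0 \<le> a" "0 \<le> b" "0 \<le> c" "c < 1" "a * c < 1" "b * c < 1" "a * b * c < 1"
  shows "max 1 a * max 1 b * c < 1"
  using assms by (auto simp: max_def)

lemma lin_le: "real (j + i) + 1 \<le> (real i + 1) * (real j + 1)"
  by (simp add: algebra_simps)

context
  fixes q :: complex
  assumes q1: "norm q < 1"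
begin

lemma fac_nz: "norm a < 1 \<Longrightarrow> 1 - a * q ^ k \<noteq> 0"
proof
  assume a: "norm a < 1" and e: "1 - a * q ^ k = 0"
  have "norm (a * q ^ k) \<le> norm a"
    using q1 by (simp add: norm_mult norm_power mult_left_le power_le_one)
  moreover have "a * q ^ k = 1" using e by simp
  ultimately show False using a by simp
qed

lemma qpoch_nz: "norm a < 1 \<Longrightarrow> qpoch a q n \<noteq> 0"
  unfolding qpoch_def using fac_nz[of a] by (simp add: prod_zero_iff)

lemma qq_nz: "qpoch q q n \<noteq> 0"
  using q1 qpoch_nz by blast

lemma conv: "convergent_prod (\<lambda>k. 1 - a * q ^ k)"
proof (rule abs_convergent_prod_imp_convergent_prod, rule summable_imp_abs_convergent_prod)
  have "summable (\<lambda>k. norm a * norm q ^ k)"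
    using q1 by (intro summable_mult summable_geometric) simp
  then show "summable (\<lambda>k. norm (1 - a * q ^ k - 1))"
    by (simp add: norm_mult norm_power)
qed

lemma qlim: "(\<lambda>n. qpoch a q n) \<longlonglongrightarrow> qpoch_inf a q"
proof -
  have "(\<lambda>n. \<Prod>i\<le>n. 1 - a * q ^ i) \<longlonglongrightarrow> qpoch_inf a q"
    unfolding qpoch_inf_def by (rule convergent_prod_LIMSEQ[OF conv])
  then have "(\<lambda>n. qpoch a q (Suc n)) \<longlonglongrightarrow> qpoch_inf a q"
    by (simp add: qpoch_def lessThan_Suc_atMost)
  then show ?thesis by (simp add: filterlim_sequentially_Suc)
qed

lemma qsplit:
  assumes "\<And>k. k < n \<Longrightarrow> 1 - a * q ^ k \<noteq> 0"
  shows "qpoch_inf a q = qpoch a q n * qpoch_inf (a * q ^ n) q"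
proof -
  have "qpoch_inf a q = (\<Prod>i. 1 - a * q ^ (i + n)) * (\<Prod>i<n. 1 - a * q ^ i)"
    unfolding qpoch_inf_def by (rule prodinf_split_initial_segment[OF conv assms])
  also have "(\<lambda>i. 1 - a * q ^ (i + n)) = (\<lambda>i. 1 - (a * q ^ n) * q ^ i)"
    by (simp add: power_add algebra_simps)
  finally show ?thesis by (simp add: qpoch_inf_def qpoch_def mult.commute)
qed

lemma qinf_nz: "(\<And>k. 1 - a * q ^ k \<noteq> 0) \<Longrightarrow> qpoch_inf a q \<noteq> 0"
  unfolding qpoch_inf_def by (rule prodinf_nonzero[OF conv])

lemma qinf_nz': "norm a < 1 \<Longrightarrow> qpoch_inf a q \<noteq> 0"
  by (rule qinf_nz) (rule fac_nz)

lemma cP_Suc: "cauchyP q (Suc l) x y = cauchyP q l x y * (x - q ^ l * y)"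
  by (simp add: cauchyP_def)

lemma qp_Suc: "qpoch a q (Suc n) = qpoch a q n * (1 - a * q ^ n)"
  by (simp add: qpoch_def)

lemma qp_Suc_q: "qpoch q q (Suc n) = qpoch q q n * (1 - q ^ Suc n)"
  by (simp add: qpoch_def)

lemma qpow_nz: "1 - q ^ Suc n \<noteq> 0"
  using fac_nz[of q n] q1 by simp

lemma qbin_abs:
  assumes xz: "norm (x * z) < 1"
  shows "summable (\<lambda>l. norm (cauchyP q l x y / qpoch q q l * z ^ l))"
proof -
  define c where "c = (1 + norm (x * z)) / 2"
  have c1: "c < 1" and c2: "norm (x * z) < c" using xz by (auto simp: c_def)
  define g where "g l = norm ((x - q ^ l * y) * z / (1 - q ^ Suc l))" for l
  have "(\<lambda>l. q ^ l) \<longlonglongrightarrow> 0" using q1 by (rule LIMSEQ_power_zero)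
  then have "(\<lambda>l. q ^ Suc l) \<longlonglongrightarrow> 0" by (rule LIMSEQ_Suc)
  with \<open>(\<lambda>l. q ^ l) \<longlonglongrightarrow> 0\<close> have "g \<longlonglongrightarrow> norm ((x - 0 * y) * z / (1 - 0))"
    unfolding g_def using q1 by (intro tendsto_intros) auto
  then have "g \<longlonglongrightarrow> norm (x * z)" by simp
  from order_tendstoD(2)[OF this c2] obtain N where N: "\<And>l. l \<ge> N \<Longrightarrow> g l < c"
    by (auto simp: eventually_sequentially)
  show ?thesis
  proof (rule summable_ratio_test[OF c1, of N])
    fix l assume "l \<ge> N"
    have "cauchyP q (Suc l) x y / qpoch q q (Suc l) * z ^ Suc l
        = (cauchyP q l x y / qpoch q q l * z ^ l) * ((x - q ^ l * y) * z / (1 - q ^ Suc l))"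
      using qq_nz[of l] qpow_nz[of l] by (simp add: cP_Suc qp_Suc_q field_simps)
    then have "norm (norm (cauchyP q (Suc l) x y / qpoch q q (Suc l) * z ^ Suc l))
        = norm (cauchyP q l x y / qpoch q q l * z ^ l) * g l"
      unfolding g_def real_norm_def abs_norm_cancel by (simp only: norm_mult)
    also have "\<dots> \<le> norm (cauchyP q l x y / qpoch q q l * z ^ l) * c"
      using N[OF \<open>l \<ge> N\<close>] by (intro mult_left_mono) auto
    finally show "norm (norm (cauchyP q (Suc l) x y / qpoch q q (Suc l) * z ^ Suc l))
        \<le> c * norm (norm (cauchyP q l x y / qpoch q q l * z ^ l))"
      by (simp add: mult.commute)
  qed
qed

lemma qbin:
  assumes xz: "norm (x * z) < 1"
  shows "(\<lambda>l. cauchyP q l x y / qpoch q q l * z ^ l) sums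
           (qpoch_inf (y * z) q / qpoch_inf (x * z) q)"
proof -
  define c where "c l = cauchyP q l x y / qpoch q q l" for l
  define F where "F w = (\<Sum>l. c l * w ^ l)" for w
  have nq: "norm (x * (q ^ n * w)) < 1" if "norm (x * w) < 1" for w n
  proof -
    have "norm (x * (q ^ n * w)) = norm q ^ n * norm (x * w)"
      by (simp add: norm_mult norm_power)
    also have "\<dots> \<le> norm (x * w)"
      using q1 by (intro mult_left_le_one_le) (auto simp: power_le_one)
    finally show ?thesis using that by simp
  qed
  have sF: "(\<lambda>l. c l * w ^ l) sums F w" if "norm (x * w) < 1" for w
    using summable_norm_cancel[OF qbin_abs[OF that, of y]]
    unfolding F_def c_def by (simp add: summable_sums)
  have fe: "(1 - x * w) * F w = (1 - y * w) * F (q * w)" if w: "norm (x * w) < 1" for w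
  proof -
    have w': "norm (x * (q * w)) < 1" using nq[OF w, of 1] by simp
    have s1: "(\<lambda>l. c l * w ^ l - c l * (q * w) ^ l) sums (F w - F (q * w))"
      by (intro sums_diff sF w w')
    have s2: "(\<lambda>l. c (Suc l) * w ^ Suc l - c (Suc l) * (q * w) ^ Suc l) sums (F w - F (q * w))"
      using s1 by (subst sums_Suc_iff) simp
    have s3: "(\<lambda>l. w * (x * (c l * w ^ l) - y * (c l * (q * w) ^ l))) sums (w * (x * F w - y * F (q * w)))"
      by (intro sums_mult sums_diff sF w w')
    have "(\<lambda>l. c (Suc l) * w ^ Suc l - c (Suc l) * (q * w) ^ Suc l)
        = (\<lambda>l. w * (x * (c l * w ^ l) - y * (c l * (q * w) ^ l)))"
    proof
      fix l
      have "c (Suc l) * (1 - q ^ Suc l) = c l * (x - q ^ l * y)"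
        using qq_nz[of l] qpow_nz[of l] by (simp add: c_def cP_Suc qp_Suc_q field_simps)
      then have "c (Suc l) * w ^ Suc l - c (Suc l) * (q * w) ^ Suc l
           = (c (Suc l) * (1 - q ^ Suc l)) * w ^ Suc l"
        by (simp add: power_mult_distrib algebra_simps)
      also have "\<dots> = (c l * (x - q ^ l * y)) * w ^ Suc l"
        using \<open>c (Suc l) * (1 - q ^ Suc l) = c l * (x - q ^ l * y)\<close> by simp
      also have "\<dots> = w * (x * (c l * w ^ l) - y * (c l * (q * w) ^ l))"
        by (simp add: power_mult_distrib algebra_simps)
      finally show "c (Suc l) * w ^ Suc l - c (Suc l) * (q * w) ^ Suc l
           = w * (x * (c l * w ^ l) - y * (c l * (q * w) ^ l))" .
    qed
    with s2 s3 have "F w - F (q * w) = w * (x * F w - y * F (q * w))"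
      by (metis sums_unique2)
    then show ?thesis by (simp add: algebra_simps)
  qed
  have it: "F z * qpoch (x * z) q n = qpoch (y * z) q n * F (q ^ n * z)" for n
  proof (induction n)
    case 0 then show ?case by (simp add: qpoch_def)
  next
    case (Suc n)
    have "F z * qpoch (x * z) q (Suc n) = (F z * qpoch (x * z) q n) * (1 - x * (q ^ n * z))"
      by (simp add: qp_Suc algebra_simps)
    also have "\<dots> = qpoch (y * z) q n * ((1 - x * (q ^ n * z)) * F (q ^ n * z))"
      using Suc by simp
    also have "\<dots> = qpoch (y * z) q n * ((1 - y * (q ^ n * z)) * F (q * (q ^ n * z)))"
      using fe[OF nq[OF xz, of n]] by simp
    also have "\<dots> = qpoch (y * z) q (Suc n) * F (q ^ Suc n * z)"
      by (simp add: qp_Suc algebra_simps)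
    finally show ?case .
  qed
  have F0: "F 0 = 1" unfolding F_def c_def
    using powser_zero[of "\<lambda>l. cauchyP q l x y / qpoch q q l"]
    by (simp add: cauchyP_def qpoch_def)
  have lim1: "(\<lambda>n. F (q ^ n * z)) \<longlonglongrightarrow> 1"
  proof (cases "z = 0")
    case True then show ?thesis using F0 by simp
  next
    case False
    have "isCont F 0" unfolding F_def
      by (rule isCont_powser[of c z]) (use sF[OF xz] False in \<open>auto simp: sums_iff\<close>)
    moreover have "(\<lambda>n. q ^ n * z) \<longlonglongrightarrow> 0"
      using q1 by (intro tendsto_mult_left_zero LIMSEQ_power_zero)
    ultimately have "(\<lambda>n. F (q ^ n * z)) \<longlonglongrightarrow> F 0"
      by (rule isCont_tendsto_compose)
    then show ?thesis using F0 by simp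
  qed
  have "(\<lambda>n. F z * qpoch (x * z) q n) \<longlonglongrightarrow> F z * qpoch_inf (x * z) q"
    by (intro tendsto_intros qlim)
  moreover have "(\<lambda>n. qpoch (y * z) q n * F (q ^ n * z)) \<longlonglongrightarrow> qpoch_inf (y * z) q * 1"
    by (intro tendsto_intros qlim lim1)
  ultimately have "F z * qpoch_inf (x * z) q = qpoch_inf (y * z) q"
    using it by (simp add: LIMSEQ_unique)
  then have "F z = qpoch_inf (y * z) q / qpoch_inf (x * z) q"
    using qinf_nz'[OF xz] by (simp add: field_simps)
  then show ?thesis using sF[OF xz] by (simp add: c_def)
qed

lemma pascal_alg0:
  fixes M A B c d :: complex
  assumes "A \<noteq> 0" "B \<noteq> 0" "c \<noteq> 0" "d \<noteq> 0"
  shows "M / (A * (B * d)) + (1 - c) * (M / (A * c * B)) = M * (1 - (1 - c) * (1 - d)) / (A * c * (B * d))"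
  using assms by (simp add: field_simps)

lemma pascal_alg:
  fixes M A B a b :: complex
  assumes "A \<noteq> 0" "B \<noteq> 0" "1 - a \<noteq> 0" "1 - b \<noteq> 0"
  shows "M / (A * (B * (1 - b))) + a * (M / (A * (1 - a) * B)) = M * (1 - a * b) / (A * (1 - a) * (B * (1 - b)))"
  using pascal_alg0[OF assms, of M] by simp

lemma qbinom_pascal:
  "qbinom q (l + Suc d) l + q ^ Suc l * qbinom q (l + Suc d) (Suc l)
     = qbinom q (Suc (l + Suc d)) (Suc l)"
proof -
  have e1: "l + Suc d - l = Suc d" and e2: "l + Suc d - Suc l = d"
    and e3: "Suc (l + Suc d) - Suc l = Suc d" by simp_all
  have pw: "q ^ Suc (l + Suc d) = q ^ Suc l * q ^ Suc d"
    by (simp add: power_add[symmetric])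
  have "qbinom q (Suc (l + Suc d)) (Suc l) = qpoch q q (l + Suc d) * (1 - q ^ Suc l * q ^ Suc d)
      / (qpoch q q l * (1 - q ^ Suc l) * (qpoch q q d * (1 - q ^ Suc d)))"
    unfolding qbinom_def e3 by (simp only: qp_Suc_q pw)
  moreover have "qbinom q (l + Suc d) l = qpoch q q (l + Suc d) / (qpoch q q l * (qpoch q q d * (1 - q ^ Suc d)))"
    unfolding qbinom_def e1 by (simp only: qp_Suc_q)
  moreover have "qbinom q (l + Suc d) (Suc l) = qpoch q q (l + Suc d) / (qpoch q q l * (1 - q ^ Suc l) * qpoch q q d)"
    unfolding qbinom_def e2 by (simp only: qp_Suc_q)
  ultimately show ?thesis
    using pascal_alg[OF qq_nz[of l] qq_nz[of d] qpow_nz[of l] qpow_nz[of d]] by simp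
qed

lemma gb_eq: "l \<le> m \<Longrightarrow> gb q m l = qbinom q m l"
proof (induction m arbitrary: l)
  case 0 then show ?case by (simp add: qbinom_def qpoch_def)
next
  case (Suc m)
  show ?case
  proof (cases l)
    case 0 then show ?thesis using qq_nz[of "Suc m"] by (simp add: qbinom_def qpoch_def)
  next
    case (Suc l')
    show ?thesis
    proof (cases "l' = m")
      case True
      then show ?thesis using Suc qq_nz[of "Suc m"]
        by (simp add: gb_zero qbinom_def Suc.IH qpoch_def)
    next
      case False
      with Suc Suc.prems obtain d where m: "m = l' + Suc d"
        by (metis Suc_le_mono le_neq_implies_less less_iff_Suc_add add_Suc_right add_Suc)
      show ?thesis using Suc Suc.IH[of l'] Suc.IH[of "Suc l'"] qbinom_pascal[of l' d] m
        by simp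
    qed
  qed
qed

lemma rsh_gb: "m \<le> N \<Longrightarrow> rsh q m x y = (\<Sum>l\<le>N. gb q m l * cauchyP q l x y)"
proof -
  assume mN: "m \<le> N"
  have "rsh q m x y = (\<Sum>l\<le>m. gb q m l * cauchyP q l x y)"
    unfolding rsh_def by (rule sum.cong) (auto simp: gb_eq)
  also have "\<dots> = (\<Sum>l\<le>N. gb q m l * cauchyP q l x y)"
    by (rule sum.mono_neutral_left) (use mN in \<open>auto simp: gb_zero\<close>)
  finally show ?thesis .
qed

lemma S1: "rsh q (Suc m) x y = x * rsh q m x y + (1 - y) * rsh q m (q * x) (q * y)"
proof -
  let ?P = "\<lambda>l. cauchyP q l x y"
  have A: "(\<Sum>l\<le>Suc m. gb q (Suc m) l * ?P l)
     = 1 + (\<Sum>l\<le>m. gb q m l * ?P (Suc l)) + (\<Sum>l\<le>m. q ^ Suc l * gb q m (Suc l) * ?P (Suc l))"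
    by (simp only: sum.atMost_Suc_shift) (simp add: sum.distrib distrib_right cP_0 mult.assoc)
  have B: "(\<Sum>l\<le>Suc m. gb q m l * ?P l * (x - q ^ l * y)) = (\<Sum>l\<le>m. gb q m l * ?P (Suc l))"
    by (simp add: cP_Suc gb_zero mult.assoc)
  have C: "(\<Sum>l\<le>Suc m. gb q m l * (q ^ l * ?P l)) = 1 + (\<Sum>l\<le>m. q ^ Suc l * gb q m (Suc l) * ?P (Suc l))"
    by (simp only: sum.atMost_Suc_shift) (simp add: cP_0 mult_ac)
  have "x * rsh q m x y + (1 - y) * rsh q m (q * x) (q * y)
      = x * (\<Sum>l\<le>Suc m. gb q m l * ?P l) + (1 - y) * (\<Sum>l\<le>Suc m. gb q m l * (q ^ l * ?P l))"
    by (simp add: rsh_gb[of m "Suc m"] cP_scale)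
  also have "\<dots> = (\<Sum>l\<le>Suc m. gb q m l * ?P l * (x - q ^ l * y)) + (\<Sum>l\<le>Suc m. gb q m l * (q ^ l * ?P l))"
    by (simp add: sum_distrib_left sum.distrib[symmetric] algebra_simps)
  also have "\<dots> = (\<Sum>l\<le>Suc m. gb q (Suc m) l * ?P l)"
    unfolding A B C by simp
  also have "\<dots> = rsh q (Suc m) x y" by (rule rsh_gb[symmetric]) simp
  finally show ?thesis by simp
qed

lemma L4: "rsh q (m + k) x y = (\<Sum>n\<le>k. gb q k n * qpoch y q n * x ^ (k - n) * rsh q m (q ^ n * x) (q ^ n * y))"
proof (induction k arbitrary: m)
  case 0 then show ?case by (simp add: qpoch_def)
next
  case (Suc k)
  define g where "g n = rsh q m (q ^ n * x) (q ^ n * y)" for n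
  have "rsh q (m + Suc k) x y = rsh q (Suc m + k) x y" by simp
  also have "\<dots> = (\<Sum>n\<le>k. gb q k n * qpoch y q n * x ^ (k - n) * rsh q (Suc m) (q ^ n * x) (q ^ n * y))"
    by (rule Suc.IH)
  also have "\<dots> = (\<Sum>n\<le>k. gb q k n * qpoch y q n * x ^ (k - n) * (q ^ n * x * g n + (1 - q ^ n * y) * g (Suc n)))"
    by (rule sum.cong) (simp_all add: S1 g_def mult.assoc)
  also have "\<dots> = (\<Sum>n\<le>k. gb q k n * q ^ n * qpoch y q n * x ^ (Suc k - n) * g n
                 + gb q k n * qpoch y q (Suc n) * x ^ (k - n) * g (Suc n))"
    by (rule sum.cong) (auto simp: qp_Suc Suc_diff_le algebra_simps)
  also have "\<dots> = (\<Sum>n\<le>k. gb q k n * q ^ n * qpoch y q n * x ^ (Suc k - n) * g n)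
                 + (\<Sum>n\<le>k. gb q k n * qpoch y q (Suc n) * x ^ (k - n) * g (Suc n))"
    by (simp only: sum.distrib)
  also have "(\<Sum>n\<le>k. gb q k n * q ^ n * qpoch y q n * x ^ (Suc k - n) * g n)
        = (\<Sum>n\<le>Suc k. gb q k n * q ^ n * qpoch y q n * x ^ (Suc k - n) * g n)"
    by (simp add: gb_zero)
  also have "\<dots> = x ^ Suc k * g 0 + (\<Sum>n\<le>k. q ^ Suc n * gb q k (Suc n) * qpoch y q (Suc n) * x ^ (k - n) * g (Suc n))"
    by (simp only: sum.atMost_Suc_shift) (simp add: qpoch_def algebra_simps)
  also have "x ^ Suc k * g 0 + (\<Sum>n\<le>k. q ^ Suc n * gb q k (Suc n) * qpoch y q (Suc n) * x ^ (k - n) * g (Suc n))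
      + (\<Sum>n\<le>k. gb q k n * qpoch y q (Suc n) * x ^ (k - n) * g (Suc n))
      = (\<Sum>n\<le>Suc k. gb q (Suc k) n * qpoch y q n * x ^ (Suc k - n) * g n)"
    by (simp only: sum.atMost_Suc_shift) (simp add: qpoch_def sum.distrib[symmetric] algebra_simps)
  finally show ?case by (simp add: g_def)
qed

lemma geo_le: "(\<Sum>k<n. norm q ^ k) \<le> 1 / (1 - norm q)"
proof -
  have "norm q \<noteq> 1" using q1 by simp
  then have "(\<Sum>k<n. norm q ^ k) = (1 - norm q ^ n) / (1 - norm q)"
    by (simp add: sum_gp_strict)
  also have "\<dots> \<le> 1 / (1 - norm q)"
    using q1 by (intro divide_right_mono) auto
  finally show ?thesis .
qed

lemma H1: "norm (qpoch a q n) \<le> exp (norm a / (1 - norm q))"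
proof -
  have "norm (qpoch a q n) = (\<Prod>k<n. norm (1 - a * q ^ k))"
    by (simp add: qpoch_def prod_norm)
  also have "\<dots> \<le> (\<Prod>k<n. exp (norm a * norm q ^ k))"
  proof (rule prod_mono)
    fix k assume "k \<in> {..<n}"
    have "norm (1 - a * q ^ k) \<le> 1 + norm a * norm q ^ k"
      by (metis norm_one norm_triangle_ineq4 norm_mult norm_power)
    also have "\<dots> \<le> exp (norm a * norm q ^ k)" by simp
    finally show "0 \<le> norm (1 - a * q ^ k) \<and> norm (1 - a * q ^ k) \<le> exp (norm a * norm q ^ k)"
      by simp
  qed
  also have "\<dots> = exp (norm a * (\<Sum>k<n. norm q ^ k))"
    by (simp add: exp_sum sum_distrib_left)
  also have "\<dots> \<le> exp (norm a * (1 / (1 - norm q)))"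
    by (intro exp_mono mult_left_mono geo_le) auto
  finally show ?thesis by simp
qed

lemma H2: "norm (qpoch_inf a q) \<le> exp (norm a / (1 - norm q))"
  by (rule LIMSEQ_le_const2[OF tendsto_norm[OF qlim]]) (use H1 in auto)

lemma H3:
  assumes "norm a < 1"
  shows "1 / norm (qpoch a q n) \<le> exp (norm a / (1 - norm q)) / norm (qpoch_inf a q)"
proof -
  have sp: "qpoch_inf a q = qpoch a q n * qpoch_inf (a * q ^ n) q"
    by (rule qsplit) (rule fac_nz[OF assms])
  have nz: "qpoch a q n \<noteq> 0" "qpoch_inf a q \<noteq> 0"
    using qpoch_nz[OF assms] qinf_nz'[OF assms] by auto
  have "norm (a * q ^ n) \<le> norm a"
    using q1 by (simp add: norm_mult norm_power mult_left_le power_le_one)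
  then have "norm (qpoch_inf (a * q ^ n) q) \<le> exp (norm a / (1 - norm q))"
    using H2[of "a * q ^ n"] q1 by (smt (verit, best) divide_right_mono exp_le_cancel_iff)
  moreover have "1 / norm (qpoch a q n) = norm (qpoch_inf (a * q ^ n) q) / norm (qpoch_inf a q)"
    using nz sp by (simp add: norm_mult field_simps)
  ultimately show ?thesis
    using nz by (simp add: divide_right_mono)
qed

lemma H4: "norm (cauchyP q i u v) \<le> max 1 (norm u) ^ i * exp (norm v / (1 - norm q))"
proof -
  let ?m = "max 1 (norm u)"
  have "norm (cauchyP q i u v) = (\<Prod>k<i. norm (u - q ^ k * v))"
    by (simp add: cauchyP_def prod_norm)
  also have "\<dots> \<le> (\<Prod>k<i. ?m * exp (norm v * norm q ^ k))"
  proof (rule prod_mono)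
    fix k assume "k \<in> {..<i}"
    have "norm (u - q ^ k * v) \<le> norm u + norm v * norm q ^ k"
      by (metis norm_triangle_ineq4 norm_mult norm_power mult.commute)
    also have "\<dots> \<le> ?m + ?m * (norm v * norm q ^ k)"
      using mult_right_mono[of 1 ?m "norm v * norm q ^ k"] by (intro add_mono) auto
    also have "\<dots> = ?m * (1 + norm v * norm q ^ k)" by (simp add: algebra_simps)
    also have "\<dots> \<le> ?m * exp (norm v * norm q ^ k)"
      by (intro mult_left_mono) auto
    finally show "0 \<le> norm (u - q ^ k * v) \<and> norm (u - q ^ k * v) \<le> ?m * exp (norm v * norm q ^ k)"
      by simp
  qed
  also have "\<dots> = ?m ^ i * exp (norm v * (\<Sum>k<i. norm q ^ k))"
    by (simp add: exp_sum sum_distrib_left prod.distrib)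
  also have "\<dots> \<le> ?m ^ i * exp (norm v * (1 / (1 - norm q)))"
    by (intro mult_left_mono exp_mono geo_le) auto
  finally show ?thesis by simp
qed

lemma Hq: "1 / norm (qpoch q q n) \<le> exp (norm q / (1 - norm q)) / norm (qpoch_inf q q)"
  by (rule H3[OF q1])

lemma qinf0: "qpoch_inf 0 q = 1"
  by (simp add: qpoch_inf_def)

lemma cP10: "cauchyP q r 1 0 = 1"
  by (simp add: cauchyP_def)

lemma Eser: "norm t < 1 \<Longrightarrow> (\<lambda>r. t ^ r / qpoch q q r) sums (1 / qpoch_inf t q)"
  using qbin[of 1 t 0] by (simp add: qinf0 cP10)

lemma Eabs: "norm t < 1 \<Longrightarrow> summable (\<lambda>r. norm (t ^ r / qpoch q q r))"
  using qbin_abs[of 1 t 0] by (simp add: cP10)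

definition fn :: "complex \<Rightarrow> complex \<Rightarrow> complex \<Rightarrow> nat \<Rightarrow> complex" where
  "fn x y t n = qpoch_inf (y * (q ^ n * t)) q / (qpoch_inf t q * qpoch_inf (x * (q ^ n * t)) q)"

definition Rk :: "complex \<Rightarrow> complex \<Rightarrow> complex \<Rightarrow> nat \<Rightarrow> complex" where
  "Rk x y t k = (\<Sum>n\<le>k. gb q k n * qpoch y q n * x ^ (k - n) * fn x y t n)"

lemma fn_ser:
  assumes t: "norm t < 1" and xt: "norm (x * t) < 1"
  shows "(\<lambda>m. t ^ m / qpoch q q m * rsh q m (q ^ n * x) (q ^ n * y)) sums fn x y t n"
proof -
  have xnt: "norm (x * (q ^ n * t)) < 1"
  proof -
    have "norm (x * (q ^ n * t)) = norm q ^ n * norm (x * t)"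
      by (simp add: norm_mult norm_power)
    also have "\<dots> \<le> norm (x * t)"
      using q1 by (intro mult_left_le_one_le) (auto simp: power_le_one)
    finally show ?thesis using xt by simp
  qed
  let ?a = "\<lambda>l. cauchyP q l x y / qpoch q q l * (q ^ n * t) ^ l"
  let ?b = "\<lambda>r. t ^ r / qpoch q q r"
  have "(\<lambda>m. \<Sum>i\<le>m. ?a i * ?b (m - i)) sums (suminf ?a * suminf ?b)"
    by (rule Cauchy_product_sums[OF qbin_abs[OF xnt] Eabs[OF t]])
  moreover have "suminf ?a * suminf ?b = fn x y t n"
  proof -
    have "suminf ?a = qpoch_inf (y * (q ^ n * t)) q / qpoch_inf (x * (q ^ n * t)) q"
      using qbin[OF xnt, of y] by (simp add: sums_iff)
    moreover have "suminf ?b = 1 / qpoch_inf t q"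
      using Eser[OF t] by (simp add: sums_iff)
    ultimately show ?thesis by (simp add: fn_def)
  qed
  moreover have "(\<Sum>i\<le>m. ?a i * ?b (m - i)) = t ^ m / qpoch q q m * rsh q m (q ^ n * x) (q ^ n * y)" for m
  proof -
    have "t ^ m / qpoch q q m * rsh q m (q ^ n * x) (q ^ n * y)
        = (\<Sum>i\<le>m. t ^ m / qpoch q q m * (qbinom q m i * ((q ^ n) ^ i * cauchyP q i x y)))"
      by (simp add: rsh_def cP_scale sum_distrib_left)
    also have "\<dots> = (\<Sum>i\<le>m. ?a i * ?b (m - i))"
    proof (rule sum.cong)
      fix i assume "i \<in> {..m}"
      then have im: "i \<le> m" by simp
      have tm: "t ^ m = t ^ i * t ^ (m - i)"
        using im by (simp add: power_add[symmetric])
      show "t ^ m / qpoch q q m * (qbinom q m i * ((q ^ n) ^ i * cauchyP q i x y)) = ?a i * ?b (m - i)"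
        unfolding qbinom_def tm using qq_nz[of m] qq_nz[of i] qq_nz[of "m - i"]
        by (simp add: power_mult_distrib field_simps)
    qed simp
    finally show ?thesis by simp
  qed
  ultimately show ?thesis by simp
qed

lemma L5:
  assumes t: "norm t < 1" and xt: "norm (x * t) < 1"
  shows "(\<lambda>m. rsh q (m + k) x y * t ^ m / qpoch q q m) sums Rk x y t k"
proof -
  have "(\<lambda>m. \<Sum>n\<le>k. gb q k n * qpoch y q n * x ^ (k - n) * (t ^ m / qpoch q q m * rsh q m (q ^ n * x) (q ^ n * y)))
      sums (\<Sum>n\<le>k. gb q k n * qpoch y q n * x ^ (k - n) * fn x y t n)"
    by (intro sums_sum sums_mult fn_ser t xt)
  moreover have "(\<Sum>n\<le>k. gb q k n * qpoch y q n * x ^ (k - n) * (t ^ m / qpoch q q m * rsh q m (q ^ n * x) (q ^ n * y)))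
      = rsh q (m + k) x y * t ^ m / qpoch q q m" for m
    by (simp add: L4[of m k] sum_distrib_left sum_distrib_right sum_divide_distrib mult_ac)
  ultimately show ?thesis by (simp add: Rk_def)
qed

lemma Hqb: "l \<le> N \<Longrightarrow> norm (qbinom q N l) \<le> exp (norm q / (1 - norm q)) * (exp (norm q / (1 - norm q)) / norm (qpoch_inf q q)) ^ 2"
proof -
  define K where "K = exp (norm q / (1 - norm q)) / norm (qpoch_inf q q)"
  have K: "1 / norm (qpoch q q n) \<le> K" for n using Hq unfolding K_def .
  have K0: "K \<ge> 0" unfolding K_def by simp
  have "norm (qbinom q N l) = norm (qpoch q q N) * (1 / norm (qpoch q q l)) * (1 / norm (qpoch q q (N - l)))"
    by (simp add: qbinom_def norm_divide norm_mult)
  also have "\<dots> \<le> exp (norm q / (1 - norm q)) * K * K"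
    using K0 by (intro mult_mono H1 K) (auto intro: order_trans[OF _ K])
  finally show ?thesis by (simp add: K_def power2_eq_square mult.assoc)
qed

lemma Hrsh:
  "norm (rsh q N x y) \<le> (exp (norm q / (1 - norm q)) * (exp (norm q / (1 - norm q)) / norm (qpoch_inf q q)) ^ 2
      * exp (norm y / (1 - norm q))) * (real N + 1) * max 1 (norm x) ^ N"
proof -
  define B where "B = exp (norm q / (1 - norm q)) * (exp (norm q / (1 - norm q)) / norm (qpoch_inf q q)) ^ 2"
  define Ky where "Ky = exp (norm y / (1 - norm q))"
  have B0: "B \<ge> 0" unfolding B_def by simp
  have "norm (rsh q N x y) \<le> (\<Sum>l\<le>N. norm (qbinom q N l * cauchyP q l x y))"
    unfolding rsh_def by (rule norm_sum)
  also have "\<dots> \<le> (\<Sum>l\<le>N. B * (Ky * max 1 (norm x) ^ N))"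
  proof (rule sum_mono)
    fix l assume "l \<in> {..N}"
    then have lN: "l \<le> N" by simp
    have "norm (cauchyP q l x y) \<le> max 1 (norm x) ^ l * Ky" using H4 unfolding Ky_def .
    also have "\<dots> \<le> max 1 (norm x) ^ N * Ky"
      by (intro mult_right_mono power_increasing lN) (auto simp: Ky_def)
    finally have c: "norm (cauchyP q l x y) \<le> Ky * max 1 (norm x) ^ N" by (simp add: mult.commute)
    show "norm (qbinom q N l * cauchyP q l x y) \<le> B * (Ky * max 1 (norm x) ^ N)"
      unfolding norm_mult by (intro mult_mono c) (use Hqb[OF lN] in \<open>auto simp: B_def\<close>)
  qed
  also have "\<dots> = (B * Ky) * (real N + 1) * max 1 (norm x) ^ N" by simp
  finally show ?thesis by (simp add: B_def Ky_def)
qed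

lemma LHS:
  assumes t: "norm t < 1" and xt: "norm (x * t) < 1" and ut: "norm (u * t) < 1"
    and uxt: "norm (u * x * t) < 1"
  shows "\<exists>S. (\<lambda>k. cauchyP q k u v * t ^ k / qpoch q q k * Rk x y t k) sums S \<and>
             (\<lambda>n. rsh q n x y * rsh q n u v * t ^ n / qpoch q q n) sums S"
proof -
  define a where "a i j = cauchyP q i u v * t ^ i / qpoch q q i * (rsh q (j + i) x y * t ^ j / qpoch q q j)" for i j
  define mx where "mx = max 1 (norm x)"
  define mu where "mu = max 1 (norm u)"
  define Kq where "Kq = exp (norm q / (1 - norm q)) / norm (qpoch_inf q q)"
  define Kv where "Kv = exp (norm v / (1 - norm q))"
  define Ch where "Ch = exp (norm q / (1 - norm q)) * Kq ^ 2 * exp (norm y / (1 - norm q))"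
  define r1 where "r1 = mu * mx * norm t"
  define r2 where "r2 = mx * norm t"
  have mx1: "mx \<ge> 1" and mu1: "mu \<ge> 1" by (auto simp: mx_def mu_def)
  have Kq0: "Kq \<ge> 0" and Kv0: "Kv \<ge> 0" and Ch0: "Ch \<ge> 0" by (auto simp: Kq_def Kv_def Ch_def)
  have r1: "0 \<le> r1" "r1 < 1"
    using max_prod_lt[of "norm u" "norm x" "norm t"] t xt ut uxt mx1 mu1
    by (auto simp: r1_def mu_def mx_def norm_mult mult_ac)
  have r2: "0 \<le> r2" "r2 < 1"
    using max_prod_lt[of 0 "norm x" "norm t"] t xt mx1
    by (auto simp: r2_def mx_def norm_mult mult_ac)
  have Kqb: "1 / norm (qpoch q q n) \<le> Kq" for n using Hq unfolding Kq_def .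
  have rows: "(\<lambda>j. a i j) sums (cauchyP q i u v * t ^ i / qpoch q q i * Rk x y t i)" for i
    unfolding a_def by (intro sums_mult L5 t xt)
  have bnd: "norm (a i j) \<le> (Kv * Kq * Ch * Kq * (real i + 1) * r1 ^ i) * ((real j + 1) * r2 ^ j)" for i j
  proof -
    have n1: "norm (cauchyP q i u v * t ^ i / qpoch q q i) \<le> Kv * Kq * (mu * norm t) ^ i"
    proof -
      have "norm (cauchyP q i u v * t ^ i / qpoch q q i) = norm (cauchyP q i u v) * norm t ^ i * (1 / norm (qpoch q q i))"
        by (simp add: norm_mult norm_divide norm_power)
      also have "\<dots> \<le> (mu ^ i * Kv) * norm t ^ i * Kq"
        by (intro mult_mono Kqb) (use H4[of i u v] in \<open>auto simp: mu_def Kv_def\<close>)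
      finally show ?thesis by (simp add: power_mult_distrib mult_ac)
    qed
    have n2: "norm (rsh q (j + i) x y * t ^ j / qpoch q q j) \<le> (Ch * (real (j + i) + 1) * mx ^ (j + i)) * norm t ^ j * Kq"
    proof -
      have "norm (rsh q (j + i) x y * t ^ j / qpoch q q j) = norm (rsh q (j + i) x y) * norm t ^ j * (1 / norm (qpoch q q j))"
        by (simp add: norm_mult norm_divide norm_power)
      also have "\<dots> \<le> (Ch * (real (j + i) + 1) * mx ^ (j + i)) * norm t ^ j * Kq"
        by (intro mult_mono Kqb) (use Hrsh[of "j + i" x y] in \<open>auto simp: Ch_def Kq_def mx_def\<close>)
      finally show ?thesis .
    qed
    have "norm (a i j) \<le> (Kv * Kq * (mu * norm t) ^ i) * ((Ch * (real (j + i) + 1) * mx ^ (j + i)) * norm t ^ j * Kq)"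
      unfolding a_def norm_mult by (intro mult_mono n1 n2) (use mu1 in \<open>auto intro!: mult_nonneg_nonneg simp: Kq0 Kv0\<close>)
    also have "\<dots> = (Kv * Kq * Ch * Kq) * (real (j + i) + 1) * (r1 ^ i * r2 ^ j)"
      by (simp add: r1_def r2_def power_mult_distrib power_add mult_ac)
    also have "\<dots> \<le> (Kv * Kq * Ch * Kq) * ((real i + 1) * (real j + 1)) * (r1 ^ i * r2 ^ j)"
      by (intro mult_right_mono mult_left_mono lin_le) (use Kq0 Kv0 Ch0 r1 r2 in auto)
    finally show ?thesis by (simp add: mult_ac)
  qed
  have sa: "summable (\<lambda>i. Kv * Kq * Ch * Kq * (real i + 1) * r1 ^ i)"
    using summable_mult[OF summable_lin_geo[OF r1], of "Kv * Kq * Ch * Kq"] by (simp add: mult_ac)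
  have "\<exists>S. (\<lambda>i. cauchyP q i u v * t ^ i / qpoch q q i * Rk x y t i) sums S \<and>
      (\<lambda>n. \<Sum>i\<le>n. a i (n - i)) sums S"
    by (rule DR[OF bnd sa summable_lin_geo[OF r2] _ _ rows])
       (use r1 r2 Kq0 Kv0 Ch0 in auto)
  then obtain S where S: "(\<lambda>i. cauchyP q i u v * t ^ i / qpoch q q i * Rk x y t i) sums S"
      "(\<lambda>n. \<Sum>i\<le>n. a i (n - i)) sums S" by blast
  have "(\<Sum>i\<le>n. a i (n - i)) = rsh q n x y * rsh q n u v * t ^ n / qpoch q q n" for n
  proof -
    have "(\<Sum>i\<le>n. a i (n - i)) = (\<Sum>i\<le>n. rsh q n x y * t ^ n / qpoch q q n * (qbinom q n i * cauchyP q i u v))"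
    proof (rule sum.cong)
      fix i assume "i \<in> {..n}"
      then have im: "i \<le> n" by simp
      have tm: "t ^ n = t ^ i * t ^ (n - i)"
        using im by (simp add: power_add[symmetric])
      show "a i (n - i) = rsh q n x y * t ^ n / qpoch q q n * (qbinom q n i * cauchyP q i u v)"
        unfolding a_def qbinom_def tm using im qq_nz[of n] qq_nz[of i] qq_nz[of "n - i"]
        by (simp add: field_simps)
    qed simp
    also have "\<dots> = rsh q n x y * t ^ n / qpoch q q n * rsh q n u v"
      unfolding rsh_def[of q n u v] by (rule sum_distrib_left[symmetric])
    also have "\<dots> = rsh q n x y * rsh q n u v * t ^ n / qpoch q q n" by simp
    finally show ?thesis .
  qed
  with S show ?thesis by auto
qed

lemma cP_add: "cauchyP q (n + j) u v = cauchyP q n u v * cauchyP q j u (q ^ n * v)"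
proof (induction j)
  case 0 then show ?case by (simp add: cP_0)
next
  case (Suc j)
  then show ?case by (simp add: cP_Suc power_add mult_ac)
qed

lemma cP_u: "u \<noteq> 0 \<Longrightarrow> cauchyP q n u v = u ^ n * qpoch (v / u) q n"
proof -
  assume u: "u \<noteq> 0"
  have "cauchyP q n u v = (\<Prod>k<n. u * (1 - v / u * q ^ k))"
    unfolding cauchyP_def by (rule prod.cong) (use u in \<open>auto simp: field_simps\<close>)
  then show ?thesis by (simp add: prod.distrib qpoch_def)
qed

lemma fac_from_qp: "(\<And>n. qpoch a q n \<noteq> 0) \<Longrightarrow> 1 - a * q ^ k \<noteq> 0"
  using qp_Suc[of a k] by (metis mult_zero_right)

lemma Hfn:
  assumes t: "norm t < 1" and xt: "norm (x * t) < 1"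
  shows "\<exists>C. \<forall>n. norm (fn x y t n) \<le> C"
proof -
  define E where "E a = exp (norm a / (1 - norm q))" for a :: complex
  have qt: "qpoch_inf t q \<noteq> 0" "qpoch_inf (x * t) q \<noteq> 0"
    using qinf_nz' t xt by auto
  have "norm (fn x y t n) \<le> E (y * t) * (1 / norm (qpoch_inf t q)) * (E (x * t) / norm (qpoch_inf (x * t) q))" for n
  proof -
    have sp: "qpoch_inf (x * t) q = qpoch (x * t) q n * qpoch_inf (x * (q ^ n * t)) q"
      using qsplit[of n "x * t"] fac_nz[OF xt] by (simp add: mult_ac)
    have nz: "qpoch_inf (x * (q ^ n * t)) q \<noteq> 0" using sp qt by auto
    have e1: "norm (qpoch_inf (y * (q ^ n * t)) q) \<le> E (y * t)"
    proof -
      have "norm (y * (q ^ n * t)) = norm q ^ n * norm (y * t)"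
        by (simp add: norm_mult norm_power mult_ac)
      also have "\<dots> \<le> norm (y * t)"
        using q1 by (intro mult_left_le_one_le) (auto simp: power_le_one)
      finally have "norm (y * (q ^ n * t)) \<le> norm (y * t)" .
      then show ?thesis
        using H2[of "y * (q ^ n * t)"] q1 unfolding E_def
        by (smt (verit, best) divide_right_mono exp_le_cancel_iff)
    qed
    have e2: "1 / norm (qpoch_inf (x * (q ^ n * t)) q) \<le> E (x * t) / norm (qpoch_inf (x * t) q)"
    proof -
      have "1 / norm (qpoch_inf (x * (q ^ n * t)) q) = norm (qpoch (x * t) q n) / norm (qpoch_inf (x * t) q)"
        using sp nz qt by (simp add: norm_mult field_simps)
      also have "\<dots> \<le> E (x * t) / norm (qpoch_inf (x * t) q)"
        unfolding E_def by (intro divide_right_mono H1) auto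
      finally show ?thesis .
    qed
    have "norm (fn x y t n) = norm (qpoch_inf (y * (q ^ n * t)) q) * (1 / norm (qpoch_inf t q))
        * (1 / norm (qpoch_inf (x * (q ^ n * t)) q))"
      by (simp add: fn_def norm_mult norm_divide)
    also have "\<dots> \<le> E (y * t) * (1 / norm (qpoch_inf t q)) * (E (x * t) / norm (qpoch_inf (x * t) q))"
      by (intro mult_mono e1 e2 order_refl) (auto simp: E_def)
    finally show ?thesis .
  qed
  then show ?thesis by blast
qed

lemma RHS:
  assumes t: "norm t < 1" and xt: "norm (x * t) < 1" and ut: "norm (u * t) < 1"
    and uxt: "norm (u * x * t) < 1" and u0: "u \<noteq> 0"
    and yt: "\<And>n. qpoch (y * t) q n \<noteq> 0" and vxt: "\<And>n. qpoch (v * x * t) q n \<noteq> 0"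
  shows "(\<lambda>k. cauchyP q k u v * t ^ k / qpoch q q k * Rk x y t k) sums
           (qpoch_inf (y * t) q * qpoch_inf (v * x * t) q /
              (qpoch_inf t q * qpoch_inf (x * t) q * qpoch_inf (u * x * t) q) *
            bhs [y, x * t, v / u] [y * t, v * x * t] q (u * t))"
proof -
  define b where "b n j = qpoch y q n * t ^ n * fn x y t n / qpoch q q n *
      (cauchyP q (n + j) u v * (x * t) ^ j / qpoch q q j)" for n j
  define rs where "rs n = qpoch y q n * t ^ n * fn x y t n / qpoch q q n * cauchyP q n u v *
      (qpoch_inf (q ^ n * v * (x * t)) q / qpoch_inf (u * (x * t)) q)" for n
  define mu where "mu = max 1 (norm u)"
  define Kq where "Kq = exp (norm q / (1 - norm q)) / norm (qpoch_inf q q)"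
  define Kv where "Kv = exp (norm v / (1 - norm q))"
  define Ey where "Ey = exp (norm y / (1 - norm q))"
  obtain Cf where Cf: "\<And>n. norm (fn x y t n) \<le> Cf" using Hfn[OF t xt] by blast
  have Cf0: "Cf \<ge> 0" using Cf[of 0] norm_ge_zero order_trans by blast
  define r3 where "r3 = mu * norm t"
  define r4 where "r4 = mu * norm (x * t)"
  have mu1: "mu \<ge> 1" by (auto simp: mu_def)
  have Kq0: "Kq \<ge> 0" and Kv0: "Kv \<ge> 0" and Ey0: "Ey \<ge> 0" by (auto simp: Kq_def Kv_def Ey_def)
  have r3: "0 \<le> r3" "r3 < 1"
    using max_prod_lt[of "norm u" 0 "norm t"] t ut mu1
    by (auto simp: r3_def mu_def norm_mult mult_ac)
  have r4: "0 \<le> r4" "r4 < 1"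
    using max_prod_lt[of "norm u" 0 "norm (x * t)"] xt uxt mu1
    by (auto simp: r4_def mu_def norm_mult mult_ac)
  have Kqb: "1 / norm (qpoch q q n) \<le> Kq" for n using Hq unfolding Kq_def .
  have uxt': "norm (u * (x * t)) < 1" using uxt by (simp add: mult_ac)
  have rows: "(\<lambda>j. b n j) sums rs n" for n
  proof -
    have "(\<lambda>j. cauchyP q j u (q ^ n * v) / qpoch q q j * (x * t) ^ j) sums
        (qpoch_inf (q ^ n * v * (x * t)) q / qpoch_inf (u * (x * t)) q)"
      by (rule qbin[OF uxt'])
    then have "(\<lambda>j. (qpoch y q n * t ^ n * fn x y t n / qpoch q q n * cauchyP q n u v) *
         (cauchyP q j u (q ^ n * v) / qpoch q q j * (x * t) ^ j)) sums rs n"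
      unfolding rs_def by (intro sums_mult) (simp add: mult.assoc)
    then show ?thesis unfolding b_def by (simp add: cP_add mult_ac)
  qed
  have bnd: "norm (b n j) \<le> (Ey * Cf * Kq * Kv * Kq * r3 ^ n) * r4 ^ j" for n j
  proof -
    have n1: "norm (qpoch y q n * t ^ n * fn x y t n / qpoch q q n) \<le> Ey * norm t ^ n * Cf * Kq"
    proof -
      have "norm (qpoch y q n * t ^ n * fn x y t n / qpoch q q n)
          = norm (qpoch y q n) * norm t ^ n * norm (fn x y t n) * (1 / norm (qpoch q q n))"
        by (simp add: norm_mult norm_divide norm_power)
      also have "\<dots> \<le> Ey * norm t ^ n * Cf * Kq"
        by (intro mult_mono Kqb Cf order_refl) (auto simp: Ey_def H1 Ey0 Cf0)
      finally show ?thesis .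
    qed
    have n2: "norm (cauchyP q (n + j) u v * (x * t) ^ j / qpoch q q j) \<le> (mu ^ (n + j) * Kv) * norm (x * t) ^ j * Kq"
    proof -
      have "norm (cauchyP q (n + j) u v * (x * t) ^ j / qpoch q q j)
          = norm (cauchyP q (n + j) u v) * norm (x * t) ^ j * (1 / norm (qpoch q q j))"
        by (simp add: norm_mult norm_divide norm_power)
      also have "\<dots> \<le> (mu ^ (n + j) * Kv) * norm (x * t) ^ j * Kq"
        by (intro mult_mono Kqb order_refl) (use H4[of "n + j" u v] in \<open>auto simp: mu_def Kv_def\<close>)
      finally show ?thesis .
    qed
    have "norm (b n j) \<le> (Ey * norm t ^ n * Cf * Kq) * ((mu ^ (n + j) * Kv) * norm (x * t) ^ j * Kq)"
      unfolding b_def norm_mult[of "qpoch y q n * t ^ n * fn x y t n / qpoch q q n"]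
      by (intro mult_mono n1 n2) (use Ey0 Cf0 Kq0 in auto)
    also have "\<dots> = (Ey * Cf * Kq * Kv * Kq * r3 ^ n) * r4 ^ j"
      by (simp add: r3_def r4_def power_mult_distrib power_add mult_ac)
    finally show ?thesis .
  qed
  have sa: "summable (\<lambda>n. Ey * Cf * Kq * Kv * Kq * r3 ^ n)"
    using r3 by (intro summable_mult summable_geometric) auto
  have "\<exists>S. rs sums S \<and> (\<lambda>k. \<Sum>n\<le>k. b n (k - n)) sums S"
    by (rule DR[OF bnd sa _ _ _ rows]) (use r3 r4 Ey0 Cf0 Kq0 Kv0 in \<open>auto intro: summable_geometric\<close>)
  then obtain S where S1: "rs sums S" and S2: "(\<lambda>k. \<Sum>n\<le>k. b n (k - n)) sums S" by blast
  have diag: "(\<Sum>n\<le>k. b n (k - n)) = cauchyP q k u v * t ^ k / qpoch q q k * Rk x y t k" for k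
  proof -
    have "cauchyP q k u v * t ^ k / qpoch q q k * Rk x y t k
       = (\<Sum>n\<le>k. cauchyP q k u v * t ^ k / qpoch q q k * (gb q k n * qpoch y q n * x ^ (k - n) * fn x y t n))"
      by (simp add: Rk_def sum_distrib_left)
    also have "\<dots> = (\<Sum>n\<le>k. b n (k - n))"
    proof (rule sum.cong)
      fix n assume "n \<in> {..k}"
      then have nk: "n \<le> k" by simp
      have tk: "t ^ k = t ^ n * t ^ (k - n)"
        using nk by (simp add: power_add[symmetric])
      show "cauchyP q k u v * t ^ k / qpoch q q k * (gb q k n * qpoch y q n * x ^ (k - n) * fn x y t n) = b n (k - n)"
        unfolding b_def gb_eq[OF nk] qbinom_def tk using nk qq_nz[of k] qq_nz[of n] qq_nz[of "k - n"]
        by (simp add: field_simps power_mult_distrib)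
    qed simp
    finally show ?thesis by simp
  qed
  from S2 have Sd: "(\<lambda>k. cauchyP q k u v * t ^ k / qpoch q q k * Rk x y t k) sums S"
    by (simp add: diag)
  define Cst where "Cst = qpoch_inf (y * t) q * qpoch_inf (v * x * t) q /
              (qpoch_inf t q * qpoch_inf (x * t) q * qpoch_inf (u * x * t) q)"
  define bt where "bt n = (\<Prod>a\<leftarrow>[y, x * t, v / u]. qpoch a q n) /
        (qpoch q q n * (\<Prod>b\<leftarrow>[y * t, v * x * t]. qpoch b q n)) * (u * t) ^ n" for n
  have ytf: "1 - y * t * q ^ k \<noteq> 0" for k by (rule fac_from_qp[OF yt])
  have vxtf: "1 - v * x * t * q ^ k \<noteq> 0" for k by (rule fac_from_qp[OF vxt])
  have Cnz: "Cst \<noteq> 0"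
    unfolding Cst_def using qinf_nz[OF ytf] qinf_nz[OF vxtf] qinf_nz'[OF t] qinf_nz'[OF xt] qinf_nz'[OF uxt]
    by simp
  have rsb: "rs n = Cst * bt n" for n
  proof -
    have s1: "qpoch_inf (y * t) q = qpoch (y * t) q n * qpoch_inf (y * (q ^ n * t)) q"
      using qsplit[of n "y * t"] ytf by (simp add: mult_ac)
    have s2: "qpoch_inf (v * x * t) q = qpoch (v * x * t) q n * qpoch_inf (q ^ n * v * (x * t)) q"
      using qsplit[of n "v * x * t"] vxtf by (simp add: mult_ac)
    have s3: "qpoch_inf (x * t) q = qpoch (x * t) q n * qpoch_inf (x * (q ^ n * t)) q"
      using qsplit[of n "x * t"] fac_nz[OF xt] by (simp add: mult_ac)
    have nzs: "qpoch (y * t) q n \<noteq> 0" "qpoch (v * x * t) q n \<noteq> 0" "qpoch (x * t) q n \<noteq> 0"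
      "qpoch q q n \<noteq> 0" "qpoch_inf t q \<noteq> 0" "qpoch_inf (x * t) q \<noteq> 0" "qpoch_inf (u * x * t) q \<noteq> 0"
      using yt vxt qpoch_nz[OF xt] qq_nz qinf_nz'[OF t] qinf_nz'[OF xt] qinf_nz'[OF uxt] by auto
    have nz3: "qpoch_inf (x * (q ^ n * t)) q \<noteq> 0" using s3 nzs by auto
    show ?thesis
      unfolding rs_def Cst_def bt_def fn_def s1 s2 s3 cP_u[OF u0]
      using nzs nz3 by (simp add: field_simps power_mult_distrib)
  qed
  have "(\<lambda>n. (1 / Cst) * rs n) sums ((1 / Cst) * S)" by (intro sums_mult S1)
  then have "bt sums (S / Cst)" using Cnz by (simp add: rsb)
  then have "bhs [y, x * t, v / u] [y * t, v * x * t] q (u * t) = S / Cst"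
    unfolding bhs_def bt_def by (simp add: sums_iff)
  then have "Cst * bhs [y, x * t, v / u] [y * t, v * x * t] q (u * t) = S"
    using Cnz by simp
  with Sd show ?thesis unfolding Cst_def by simp
qed

end


theorem theorem2p1:
  fixes q x y u v t :: complex
  assumes "0 < norm q" "norm q < 1"
    and "norm t < 1" "norm (x * t) < 1" "norm (u * t) < 1" "norm (u * x * t) < 1"
    and "u \<noteq> 0"
    and "\<And>n. qpoch (y * t) q n \<noteq> 0" "\<And>n. qpoch (v * x * t) q n \<noteq> 0"
  shows "(\<lambda>n. rsh q n x y * rsh q n u v * t ^ n / qpoch q q n) sums
           (qpoch_inf (y * t) q * qpoch_inf (v * x * t) q /
              (qpoch_inf t q * qpoch_inf (x * t) q * qpoch_inf (u * x * t) q) *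
            bhs [y, x * t, v / u] [y * t, v * x * t] q (u * t))"
proof -
  obtain S where S1: "(\<lambda>k. cauchyP q k u v * t ^ k / qpoch q q k * Rk q x y t k) sums S"
    and S2: "(\<lambda>n. rsh q n x y * rsh q n u v * t ^ n / qpoch q q n) sums S"
    using LHS[OF assms(2) assms(3) assms(4) assms(5) assms(6)] by blast
  have R: "(\<lambda>k. cauchyP q k u v * t ^ k / qpoch q q k * Rk q x y t k) sums
           (qpoch_inf (y * t) q * qpoch_inf (v * x * t) q /
              (qpoch_inf t q * qpoch_inf (x * t) q * qpoch_inf (u * x * t) q) *
            bhs [y, x * t, v / u] [y * t, v * x * t] q (u * t))"
    by (rule RHS[OF assms(2) assms(3) assms(4) assms(5) assms(6) assms(7) assms(8) assms(9)])
  from S1 R have "S = qpoch_inf (y * t) q * qpoch_inf (v * x * t) q /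
              (qpoch_inf t q * qpoch_inf (x * t) q * qpoch_inf (u * x * t) q) *
            bhs [y, x * t, v / u] [y * t, v * x * t] q (u * t)"
    by (rule sums_unique2)
  with S2 show ?thesis by simp
qed

end
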